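(* Let $n_1,n_2$ be positive integers. Fix $L\in\mathbb{R}^{n_1\times n_2}$ of rank $r$, a basis matrix $G\in\mathbb{R}^{n_1\times r_G}$ with $L_{\mathrm{new}}:=(I-GG^\top)L$ of rank less than $r$, and a matrix $S_0\in\mathbb{R}^{n_1\times n_2}$ with all entries nonzero. For a random subset $\Omega$ of $\{1,\dots,n_1\}\times\{1,\dots,n_2\}$, let $S=\mathcal P_\Omega S_0$ and $M=L+S$, and let "Success" be the event that $(L_{\mathrm{new}},S,L^\top G)$ is the unique solution of $$\min_{\tilde L_{\mathrm{new}},\tilde S,\tilde X}\|\tilde L_{\mathrm{new}}\|_*+\lambda\|\tilde S\|_1\ \text{ s.t. }\ \tilde L_{\mathrm{new}}+G\tilde X^\top+\tilde S=M.$$ Let $m_0$ be an integer and $\epsilon_0>0$, and set $\rho_0=\frac{m_0}{n_1n_2}+\epsilon_0\in[0,1]$. Then $$\mathbb{P}_{\mathrm{Unif}(m_0)}(\mathrm{Success})\ge\mathbb{P}_{\mathrm{Ber}(\rho_0)}(\mathrm{Success})-e^{-2n_1n_2\epsilon_0^2}.$$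
   Context: $\mathcal P_\Omega S_0$ keeps the entries of $S_0$ with index in $\Omega$ and sets the others to zero. $\mathbb{P}_{\mathrm{Unif}(m)}$ is probability when $\Omega$ is uniformly distributed among all index subsets of size $m$; $\mathbb{P}_{\mathrm{Ber}(\rho)}$ is probability when each index $(i,j)$ belongs to $\Omega$ independently with probability $\rho$. A basis matrix satisfies $G^\top G=I$. $\lambda>0$ is a fixed parameter; the variables range over $\tilde L_{\mathrm{new}},\tilde S\in\mathbb{R}^{n_1\times n_2}$, $\tilde X\in\mathbb{R}^{n_2\times r_G}$. *)

theory Defs
  imports "Jordan_Normal_Form.DL_Rank" "Jordan_Normal_Form.Char_Poly"
          "HOL-Probability.Product_PMF"
begin

text \<open>Matrices are Jordan_Normal_Form matrices with explicit dimensions; indices are 0-based,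
so the index set is {0..<n1} x {0..<n2}.\<close>

definition idx_set :: "nat \<Rightarrow> nat \<Rightarrow> (nat \<times> nat) set" where
  "idx_set n1 n2 = {0..<n1} \<times> {0..<n2}"

definition mrank :: "nat \<Rightarrow> real mat \<Rightarrow> nat" where
  "mrank n A = vec_space.rank n A"

definition singular_values :: "real mat \<Rightarrow> real multiset" where
  "singular_values A = image_mset sqrt (proots (char_poly (transpose_mat A * A)))"

definition nuc_norm :: "real mat \<Rightarrow> real" where
  "nuc_norm A = sum_mset (singular_values A)"

definition l1_norm :: "real mat \<Rightarrow> real" where
  "l1_norm A = (\<Sum>i<dim_row A. \<Sum>j<dim_col A. \<bar>A $$ (i,j)\<bar>)"

definition proj_Omega :: "(nat \<times> nat) set \<Rightarrow> real mat \<Rightarrow> real mat" where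
  "proj_Omega \<Omega> S0 = Matrix.mat (dim_row S0) (dim_col S0)
      (\<lambda>(i,j). if (i,j) \<in> \<Omega> then S0 $$ (i,j) else 0)"

definition feasible :: "nat \<Rightarrow> nat \<Rightarrow> nat \<Rightarrow> real mat \<Rightarrow> real mat \<Rightarrow>
    (real mat \<times> real mat \<times> real mat) set" where
  "feasible n1 n2 rG G M = {(Lt, S, X). Lt \<in> carrier_mat n1 n2 \<and> S \<in> carrier_mat n1 n2 \<and>
      X \<in> carrier_mat n2 rG \<and> Lt + G * transpose_mat X + S = M}"

definition objective :: "real \<Rightarrow> real mat \<times> real mat \<times> real mat \<Rightarrow> real" where
  "objective lam t = (case t of (Lt, S, X) \<Rightarrow> nuc_norm Lt + lam * l1_norm S)"

definition solutions :: "nat \<Rightarrow> nat \<Rightarrow> nat \<Rightarrow> real \<Rightarrow> real mat \<Rightarrow> real mat \<Rightarrow>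
    (real mat \<times> real mat \<times> real mat) set" where
  "solutions n1 n2 rG lam G M = {t \<in> feasible n1 n2 rG G M.
      \<forall>t' \<in> feasible n1 n2 rG G M. objective lam t \<le> objective lam t'}"

definition Success :: "nat \<Rightarrow> nat \<Rightarrow> nat \<Rightarrow> real \<Rightarrow> real mat \<Rightarrow> real mat \<Rightarrow> real mat \<Rightarrow>
    (nat \<times> nat) set \<Rightarrow> bool" where
  "Success n1 n2 rG lam L G S0 \<Omega> =
     (let Lnew = (1\<^sub>m n1 - G * transpose_mat G) * L;
          S = proj_Omega \<Omega> S0;
          M = L + S
      in solutions n1 n2 rG lam G M = {(Lnew, S, transpose_mat L * G)})"

definition unif_model :: "nat \<Rightarrow> nat \<Rightarrow> nat \<Rightarrow> (nat \<times> nat) set pmf" where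
  "unif_model n1 n2 m = pmf_of_set {\<Omega>. \<Omega> \<subseteq> idx_set n1 n2 \<and> card \<Omega> = m}"

definition ber_model :: "nat \<Rightarrow> nat \<Rightarrow> real \<Rightarrow> (nat \<times> nat) set pmf" where
  "ber_model n1 n2 \<rho> = map_pmf (\<lambda>f. {x \<in> idx_set n1 n2. f x})
      (Pi_pmf (idx_set n1 n2) False (\<lambda>_. bernoulli_pmf \<rho>))"

end

theory Submission
  imports Defs "HOL-Probability.Hoeffding"
begin

lemma l1_carrier: "A \<in> carrier_mat n1 n2 \<Longrightarrow>
  l1_norm A = (\<Sum>i<n1. \<Sum>j<n2. \<bar>A $$ (i,j)\<bar>)"
  unfolding l1_norm_def by auto

lemma l1_triangle:
  assumes "A \<in> carrier_mat n1 n2" "B \<in> carrier_mat n1 n2"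
  shows "l1_norm (A + B) \<le> l1_norm A + l1_norm B"
proof -
  have "l1_norm (A + B) = (\<Sum>i<n1. \<Sum>j<n2. \<bar>A $$ (i,j) + B $$ (i,j)\<bar>)"
    using assms by (subst l1_carrier[of _ n1 n2]) auto
  also have "\<dots> \<le> (\<Sum>i<n1. \<Sum>j<n2. \<bar>A $$ (i,j)\<bar> + \<bar>B $$ (i,j)\<bar>)"
    by (intro sum_mono abs_triangle_ineq)
  also have "\<dots> = l1_norm A + l1_norm B"
    using assms by (simp add: l1_carrier[of _ n1 n2] sum.distrib)
  finally show ?thesis .
qed

lemma proj_carrier: "S0 \<in> carrier_mat n1 n2 \<Longrightarrow> proj_Omega \<Omega> S0 \<in> carrier_mat n1 n2"
  unfolding proj_Omega_def by auto

lemma proj_idx: "S0 \<in> carrier_mat n1 n2 \<Longrightarrow> i < n1 \<Longrightarrow> j < n2 \<Longrightarrow>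
  proj_Omega \<Omega> S0 $$ (i,j) = (if (i,j) \<in> \<Omega> then S0 $$ (i,j) else 0)"
  unfolding proj_Omega_def by auto

lemma l1_split:
  assumes S0: "S0 \<in> carrier_mat n1 n2" and sub: "\<Omega>' \<subseteq> \<Omega>"
  shows "l1_norm (proj_Omega \<Omega> S0) = l1_norm (proj_Omega \<Omega>' S0)
     + l1_norm (proj_Omega \<Omega> S0 - proj_Omega \<Omega>' S0)"
proof -
  let ?S = "proj_Omega \<Omega> S0" and ?S' = "proj_Omega \<Omega>' S0"
  have c: "?S \<in> carrier_mat n1 n2" "?S' \<in> carrier_mat n1 n2" "?S - ?S' \<in> carrier_mat n1 n2"
    using S0 by (auto simp: proj_carrier intro!: minus_carrier_mat)
  have "l1_norm ?S = (\<Sum>i<n1. \<Sum>j<n2. \<bar>?S $$ (i,j)\<bar>)"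
    using c(1) by (rule l1_carrier)
  also have "\<dots> = (\<Sum>i<n1. \<Sum>j<n2. \<bar>?S' $$ (i,j)\<bar> + \<bar>(?S - ?S') $$ (i,j)\<bar>)"
  proof (intro sum.cong refl)
    fix i j assume "i \<in> {..<n1}" "j \<in> {..<n2}"
    thus "\<bar>?S $$ (i,j)\<bar> = \<bar>?S' $$ (i,j)\<bar> + \<bar>(?S - ?S') $$ (i,j)\<bar>"
      using c S0 sub by (auto simp: proj_idx)
  qed
  also have "\<dots> = l1_norm ?S' + l1_norm (?S - ?S')"
    using c by (simp add: l1_carrier[of _ n1 n2] sum.distrib)
  finally show ?thesis .
qed

lemma success_mono:
  assumes L: "L \<in> carrier_mat n1 n2" and G: "G \<in> carrier_mat n1 rG"
    and S0: "S0 \<in> carrier_mat n1 n2" and lam: "lam > 0"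
    and succ: "Success n1 n2 rG lam L G S0 \<Omega>" and sub: "\<Omega>' \<subseteq> \<Omega>"
  shows "Success n1 n2 rG lam L G S0 \<Omega>'"
proof -
  define Lnew where "Lnew = (1\<^sub>m n1 - G * transpose_mat G) * L"
  define S where "S = proj_Omega \<Omega> S0"
  define S' where "S' = proj_Omega \<Omega>' S0"
  define D where "D = S - S'"
  define X0 where "X0 = transpose_mat L * G"
  have cS: "S \<in> carrier_mat n1 n2" "S' \<in> carrier_mat n1 n2" "D \<in> carrier_mat n1 n2"
    using S0 by (auto simp: S_def S'_def D_def proj_carrier intro!: minus_carrier_mat)
  have sol: "solutions n1 n2 rG lam G (L + S) = {(Lnew, S, X0)}"
    using succ unfolding Success_def Let_def Lnew_def S_def X0_def by simp
  hence opt: "(Lnew, S, X0) \<in> feasible n1 n2 rG G (L + S)"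
     "\<And>t'. t' \<in> feasible n1 n2 rG G (L + S) \<Longrightarrow> objective lam (Lnew, S, X0) \<le> objective lam t'"
    unfolding solutions_def by blast+
  have l1S: "l1_norm S = l1_norm S' + l1_norm D"
    unfolding S_def S'_def D_def using l1_split[OF S0 sub] .
  have transfer: "(Lt, St + D, X) \<in> feasible n1 n2 rG G (L + S)"
    if "(Lt, St, X) \<in> feasible n1 n2 rG G (L + S')" for Lt St X
  proof -
    from that have c: "Lt \<in> carrier_mat n1 n2" "St \<in> carrier_mat n1 n2" "X \<in> carrier_mat n2 rG"
      and e: "Lt + G * transpose_mat X + St = L + S'"
      unfolding feasible_def by auto
    have cP: "G * transpose_mat X \<in> carrier_mat n1 n2" using c G by auto
    have "Lt + G * transpose_mat X + (St + D) = L + S"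
    proof (rule eq_matI)
      fix i j assume ij: "i < dim_row (L + S)" "j < dim_col (L + S)"
      have "(Lt + G * transpose_mat X + St) $$ (i,j) = (L + S') $$ (i,j)" using e by simp
      thus "(Lt + G * transpose_mat X + (St + D)) $$ (i, j) = (L + S) $$ (i, j)"
        using ij c cP cS L by (simp add: D_def)
    qed (use c cP cS L in auto)
    thus ?thesis using c cS unfolding feasible_def by auto
  qed
  have obj_tr: "objective lam (Lt, St + D, X) \<le> objective lam (Lt, St, X) + lam * l1_norm D"
    if "St \<in> carrier_mat n1 n2" for Lt St X
  proof -
    have "lam * l1_norm (St + D) \<le> lam * (l1_norm St + l1_norm D)"
      using l1_triangle[OF that cS(3)] lam by (intro mult_left_mono) auto
    thus ?thesis by (simp add: objective_def algebra_simps)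
  qed
  have feas': "(Lnew, S', X0) \<in> feasible n1 n2 rG G (L + S')"
  proof -
    from opt(1) have c: "Lnew \<in> carrier_mat n1 n2" "X0 \<in> carrier_mat n2 rG"
      and e: "Lnew + G * transpose_mat X0 + S = L + S"
      unfolding feasible_def by auto
    have cP: "G * transpose_mat X0 \<in> carrier_mat n1 n2" using c G by auto
    have "Lnew + G * transpose_mat X0 + S' = L + S'"
    proof (rule eq_matI)
      fix i j assume ij: "i < dim_row (L + S')" "j < dim_col (L + S')"
      have "(Lnew + G * transpose_mat X0 + S) $$ (i,j) = (L + S) $$ (i,j)" using e by simp
      thus "(Lnew + G * transpose_mat X0 + S') $$ (i, j) = (L + S') $$ (i, j)"
        using ij c cP cS L by simp
    qed (use c cP cS L in auto)
    thus ?thesis using c cS unfolding feasible_def by auto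
  qed
  have opt': "objective lam (Lnew, S', X0) \<le> objective lam t'"
    if "t' \<in> feasible n1 n2 rG G (L + S')" for t'
  proof -
    obtain Lt St X where t': "t' = (Lt, St, X)" by (cases t') auto
    have cSt: "St \<in> carrier_mat n1 n2" using that t' unfolding feasible_def by auto
    have "objective lam (Lnew, S, X0) \<le> objective lam (Lt, St + D, X)"
      using opt(2) transfer that t' by blast
    also have "\<dots> \<le> objective lam (Lt, St, X) + lam * l1_norm D" using obj_tr[OF cSt] .
    finally show ?thesis using l1S t' by (simp add: objective_def algebra_simps)
  qed
  have "solutions n1 n2 rG lam G (L + S') = {(Lnew, S', X0)}"
  proof
    show "{(Lnew, S', X0)} \<subseteq> solutions n1 n2 rG lam G (L + S')"
      using feas' opt' unfolding solutions_def by blast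
  next
    show "solutions n1 n2 rG lam G (L + S') \<subseteq> {(Lnew, S', X0)}"
    proof
      fix t assume t: "t \<in> solutions n1 n2 rG lam G (L + S')"
      obtain Lt St X where tt: "t = (Lt, St, X)" by (cases t) auto
      have ft: "(Lt, St, X) \<in> feasible n1 n2 rG G (L + S')" and
        le: "objective lam (Lt, St, X) \<le> objective lam (Lnew, S', X0)"
        using t tt feas' unfolding solutions_def by auto
      have cSt: "St \<in> carrier_mat n1 n2" using ft unfolding feasible_def by auto
      have f2: "(Lt, St + D, X) \<in> feasible n1 n2 rG G (L + S)" using transfer ft .
      have "objective lam (Lt, St + D, X) \<le> objective lam (Lnew, S, X0)"
        using obj_tr[OF cSt, of Lt X] le l1S by (simp add: objective_def algebra_simps)
      hence "(Lt, St + D, X) \<in> solutions n1 n2 rG lam G (L + S)"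
        using f2 opt(2) unfolding solutions_def by fastforce
      hence eq: "Lt = Lnew" "St + D = S" "X = X0" using sol by auto
      have "St = S'"
      proof (rule eq_matI)
        fix i j assume ij: "i < dim_row S'" "j < dim_col S'"
        have "(St + D) $$ (i,j) = S $$ (i,j)" using eq by simp
        thus "St $$ (i,j) = S' $$ (i,j)" using ij cSt cS by (simp add: D_def)
      qed (use cSt cS in auto)
      thus "t \<in> {(Lnew, S', X0)}" using eq tt by simp
    qed
  qed
  thus ?thesis unfolding Success_def Let_def Lnew_def S'_def X0_def by simp
qed

lemma ber_pmf:
  assumes I: "finite I" and T: "T \<subseteq> I" and p: "0 \<le> p" "p \<le> 1"
  shows "pmf (map_pmf (\<lambda>f. {x \<in> I. f x}) (Pi_pmf I False (\<lambda>_. bernoulli_pmf p))) T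
         = p ^ card T * (1 - p) ^ (card I - card T)"
proof -
  let ?P = "Pi_pmf I False (\<lambda>_. bernoulli_pmf p)"
  let ?g = "\<lambda>f. {x \<in> I. f x}"
  let ?c = "\<lambda>x. x \<in> T"
  have setP: "set_pmf ?P \<subseteq> {f. \<forall>x. x \<notin> I \<longrightarrow> f x = False}"
    using set_Pi_pmf_subset'[OF I, of False "\<lambda>_. bernoulli_pmf p"] by (auto simp: PiE_dflt_def)
  have "pmf (map_pmf ?g ?P) T = measure_pmf.prob ?P (?g -` {T})" by (rule pmf_map)
  also have "\<dots> = measure_pmf.prob ?P (?g -` {T} \<inter> set_pmf ?P)"
    by (rule measure_Int_set_pmf[symmetric])
  also have "?g -` {T} \<inter> set_pmf ?P = {?c} \<inter> set_pmf ?P"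
  proof (intro equalityI subsetI)
    fix f assume f: "f \<in> ?g -` {T} \<inter> set_pmf ?P"
    hence "f = ?c" using setP T by (auto simp: fun_eq_iff)
    thus "f \<in> {?c} \<inter> set_pmf ?P" using f by simp
  next
    fix f assume "f \<in> {?c} \<inter> set_pmf ?P"
    thus "f \<in> ?g -` {T} \<inter> set_pmf ?P" using T by auto
  qed
  also have "measure_pmf.prob ?P \<dots> = pmf ?P ?c"
    by (simp add: measure_Int_set_pmf measure_pmf_single)
  also have "\<dots> = (\<Prod>x\<in>I. if x \<in> T then p else 1 - p)"
    using T p by (subst pmf_Pi[OF I]) (auto intro!: prod.cong)
  also have "\<dots> = p ^ card T * (1 - p) ^ (card I - card T)"
  proof -
    have "I \<inter> {x. x \<in> T} = T" "I \<inter> - {x. x \<in> T} = I - T" using T by auto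
    moreover have "card (I - T) = card I - card T" using T I by (simp add: card_Diff_subset finite_subset)
    ultimately show ?thesis by (simp add: prod.If_cases[OF I])
  qed
  finally show ?thesis .
qed

definition acnt :: "'a set \<Rightarrow> ('a set \<Rightarrow> bool) \<Rightarrow> nat \<Rightarrow> nat" where
  "acnt I P k = card {T. T \<subseteq> I \<and> card T = k \<and> P T}"

lemma acnt_le: "finite I \<Longrightarrow> acnt I P k \<le> card I choose k"
  unfolding acnt_def by (subst n_subsets[symmetric]) (auto intro!: card_mono)

lemma count_step_nat:
  assumes I: "finite I" and down: "\<And>T T'. P T \<Longrightarrow> T' \<subseteq> T \<Longrightarrow> P T'"
  shows "acnt I P (Suc k) * Suc k \<le> acnt I P k * (card I - k)"
proof -
  define A1 where "A1 = {T. T \<subseteq> I \<and> card T = Suc k \<and> P T}"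
  define A0 where "A0 = {T. T \<subseteq> I \<and> card T = k \<and> P T}"
  have fA1: "finite A1" unfolding A1_def using I by (auto intro: finite_subset[of _ "Pow I"])
  have fA0: "finite A0" unfolding A0_def using I by (auto intro: finite_subset[of _ "Pow I"])
  have "card (Sigma A1 (\<lambda>T. T)) = (\<Sum>T\<in>A1. card T)"
    using fA1 I by (intro card_SigmaI) (auto simp: A1_def intro: finite_subset)
  also have "\<dots> = acnt I P (Suc k) * Suc k" by (simp add: A1_def acnt_def)
  finally have e1: "card (Sigma A1 (\<lambda>T. T)) = acnt I P (Suc k) * Suc k" .
  have "card (Sigma A0 (\<lambda>T. I - T)) = (\<Sum>T\<in>A0. card (I - T))"
    using fA0 I by (intro card_SigmaI) auto
  also have "\<dots> = (\<Sum>T\<in>A0. card I - k)"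
    using I by (intro sum.cong refl) (auto simp: A0_def card_Diff_subset finite_subset)
  also have "\<dots> = acnt I P k * (card I - k)" by (simp add: A0_def acnt_def)
  finally have e0: "card (Sigma A0 (\<lambda>T. I - T)) = acnt I P k * (card I - k)" .
  have "card (Sigma A1 (\<lambda>T. T)) \<le> card (Sigma A0 (\<lambda>T. I - T))"
  proof (rule card_inj_on_le[where f = "\<lambda>(T, x). (T - {x}, x)"])
    show "inj_on (\<lambda>(T, x). (T - {x}, x)) (Sigma A1 (\<lambda>T. T))"
      by (auto simp: inj_on_def)
    show "(\<lambda>(T, x). (T - {x}, x)) ` Sigma A1 (\<lambda>T. T) \<subseteq> Sigma A0 (\<lambda>T. I - T)"
    proof (rule image_subsetI)
      fix p assume "p \<in> Sigma A1 (\<lambda>T. T)"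
      then obtain T x where p: "p = (T, x)" "(T, x) \<in> Sigma A1 (\<lambda>T. T)" by (cases p) auto
      hence T: "T \<subseteq> I" "card T = Suc k" "P T" "x \<in> T" by (auto simp: A1_def)
      have "finite T" using T I by (auto intro: finite_subset)
      hence "card (T - {x}) = k" using T by simp
      moreover have "P (T - {x})" using down[of T "T - {x}"] T by blast
      ultimately have "T - {x} \<in> A0" using T unfolding A0_def by blast
      moreover have "x \<in> I - (T - {x})" using T by blast
      ultimately show "(case p of (T, x) \<Rightarrow> (T - {x}, x)) \<in> Sigma A0 (\<lambda>T. I - T)"
        using p by simp
    qed
    show "finite (Sigma A0 (\<lambda>T. I - T))" using fA0 I by auto
  qed
  thus ?thesis using e0 e1 by simp
qed

lemma count_step:
  assumes I: "finite I" and down: "\<And>T T'. P T \<Longrightarrow> T' \<subseteq> T \<Longrightarrow> P T'" and k: "k < card I"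
  shows "real (acnt I P (Suc k)) / real (card I choose Suc k)
       \<le> real (acnt I P k) / real (card I choose k)"
proof -
  let ?N = "card I"
  have c1: "Suc k * (?N choose Suc k) = (?N - k) * (?N choose k)"
    by (metis binomial_absorption binomial_absorb_comp)
  have pos0: "?N choose k > 0" "?N choose Suc k > 0" using k by auto
  have h: "real (acnt I P (Suc k)) * real (Suc k) \<le> real (acnt I P k) * real (?N - k)"
  proof -
    have "acnt I P (Suc k) * Suc k \<le> acnt I P k * (?N - k)" by (rule count_step_nat[OF I down])
    hence "real (acnt I P (Suc k) * Suc k) \<le> real (acnt I P k * (?N - k))" by (simp only: of_nat_le_iff)
    thus ?thesis by (simp only: of_nat_mult)
  qed
  have c1': "real (Suc k) * real (?N choose Suc k) = real (?N - k) * real (?N choose k)"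
    using c1 by (metis of_nat_mult)
  have pk: "real (?N - k) > 0" using k by simp
  have "real (acnt I P (Suc k)) * real (?N choose k) * real (?N - k)
      = real (acnt I P (Suc k)) * (real (?N - k) * real (?N choose k))"
    by (simp only: mult_ac)
  also have "\<dots> = real (acnt I P (Suc k)) * (real (Suc k) * real (?N choose Suc k))"
    by (simp only: c1')
  also have "\<dots> = real (acnt I P (Suc k)) * real (Suc k) * real (?N choose Suc k)"
    by (simp only: mult_ac)
  also have "\<dots> \<le> real (acnt I P k) * real (?N - k) * real (?N choose Suc k)"
    using h by (intro mult_right_mono) auto
  also have "\<dots> = real (acnt I P k) * real (?N choose Suc k) * real (?N - k)"
    by (simp only: mult_ac)
  finally have "real (acnt I P (Suc k)) * real (?N choose k) \<le> real (acnt I P k) * real (?N choose Suc k)"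
    using pk by (rule mult_right_le_imp_le)
  thus ?thesis using pos0 by (simp add: divide_simps)
qed

lemma count_mono:
  assumes I: "finite I" and down: "\<And>T T'. P T \<Longrightarrow> T' \<subseteq> T \<Longrightarrow> P T'"
    and "m \<le> k" "k \<le> card I"
  shows "real (acnt I P k) / real (card I choose k) \<le> real (acnt I P m) / real (card I choose m)"
  using assms(3,4)
proof (induction k rule: dec_induct)
  case base then show ?case by simp
next
  case (step k)
  have "real (acnt I P (Suc k)) / real (card I choose Suc k)
       \<le> real (acnt I P k) / real (card I choose k)"
    using step by (intro count_step[OF I down]) auto
  also have "\<dots> \<le> real (acnt I P m) / real (card I choose m)" using step by auto
  finally show ?case .
qed

lemma ber_bound:
  fixes I :: "'a set"
  assumes I: "finite I" and down: "\<And>T T'. P T \<Longrightarrow> T' \<subseteq> T \<Longrightarrow> P T'"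
    and p: "0 \<le> p" "p \<le> 1" and m: "m \<le> card I"
  shows "measure_pmf.prob (map_pmf (\<lambda>f. {x \<in> I. f x}) (Pi_pmf I False (\<lambda>_. bernoulli_pmf p))) {T. P T}
    \<le> measure_pmf.prob (pmf_of_set {T. T \<subseteq> I \<and> card T = m}) {T. P T}
      + (\<Sum>k\<le>m. real (card I choose k) * p ^ k * (1 - p) ^ (card I - k))"
proof -
  define N where "N = card I"
  define B where "B = map_pmf (\<lambda>f. {x \<in> I. f x}) (Pi_pmf I False (\<lambda>_. bernoulli_pmf p))"
  define w where "w = (\<lambda>k. p ^ k * (1 - p) ^ (N - k))"
  define c where "c = (\<lambda>k. real (N choose k))"
  define a where "a = (\<lambda>k. real (acnt I P k))"
  define u where "u = a m / c m"
  have w0: "w k \<ge> 0" for k using p by (simp add: w_def)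
  have cpos: "c k > 0" if "k \<le> N" for k using that by (simp add: c_def)
  have setB: "set_pmf B \<subseteq> Pow I" unfolding B_def by auto
  have fin: "finite ({T. P T} \<inter> Pow I)" using I by auto
  have "measure_pmf.prob B {T. P T} = measure_pmf.prob B ({T. P T} \<inter> Pow I)"
  proof -
    have "{T. P T} \<inter> Pow I \<inter> set_pmf B = {T. P T} \<inter> set_pmf B" using setB by blast
    thus ?thesis by (metis measure_Int_set_pmf)
  qed
  also have "\<dots> = (\<Sum>T\<in>{T. P T} \<inter> Pow I. pmf B T)" by (rule measure_measure_pmf_finite[OF fin])
  also have "\<dots> = (\<Sum>T\<in>{T. P T} \<inter> Pow I. w (card T))"
    unfolding B_def w_def N_def using I p by (intro sum.cong refl) (auto intro: ber_pmf)
  also have "\<dots> = (\<Sum>k\<in>{..N}. \<Sum>T\<in>{T \<in> {T. P T} \<inter> Pow I. card T = k}. w (card T))"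
    using fin I by (intro sum.group[symmetric]) (auto simp: N_def intro: card_mono)
  also have "\<dots> = (\<Sum>k\<in>{..N}. a k * w k)"
  proof (intro sum.cong refl)
    fix k
    have "{T \<in> {T. P T} \<inter> Pow I. card T = k} = {T. T \<subseteq> I \<and> card T = k \<and> P T}" by auto
    thus "(\<Sum>T\<in>{T \<in> {T. P T} \<inter> Pow I. card T = k}. w (card T)) = a k * w k"
      by (simp add: a_def acnt_def)
  qed
  also have "\<dots> = (\<Sum>k\<in>{..<m}. a k * w k) + (\<Sum>k\<in>{m..N}. a k * w k)"
  proof -
    have "{..N} = {..<m} \<union> {m..N}" using m by (auto simp: N_def)
    thus ?thesis by (simp add: sum.union_disjoint ivl_disj_int)
  qed
  also have "\<dots> \<le> (\<Sum>k\<le>m. c k * w k) + u"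
  proof (rule add_mono)
    have "(\<Sum>k\<in>{..<m}. a k * w k) \<le> (\<Sum>k\<in>{..<m}. c k * w k)"
      using I w0 by (intro sum_mono mult_right_mono) (auto simp: a_def c_def N_def acnt_le)
    also have "\<dots> \<le> (\<Sum>k\<le>m. c k * w k)"
      using w0 by (intro sum_mono2) (auto simp: c_def)
    finally show "(\<Sum>k\<in>{..<m}. a k * w k) \<le> (\<Sum>k\<le>m. c k * w k)" .
  next
    have "(\<Sum>k\<in>{m..N}. a k * w k) \<le> (\<Sum>k\<in>{m..N}. u * (c k * w k))"
    proof (intro sum_mono)
      fix k assume k: "k \<in> {m..N}"
      have "a k / c k \<le> u" unfolding a_def c_def u_def N_def
        using count_mono[OF I down, where m=m and k=k] k by (auto simp: N_def)
      hence "a k \<le> u * c k" using cpos[of k] k by (simp add: divide_simps)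
      thus "a k * w k \<le> u * (c k * w k)" using w0[of k] by (simp add: mult_right_mono mult.assoc[symmetric])
    qed
    also have "\<dots> = u * (\<Sum>k\<in>{m..N}. c k * w k)" by (simp add: sum_distrib_left)
    also have "\<dots> \<le> u * (\<Sum>k\<le>N. c k * w k)"
      using w0 cpos by (intro mult_left_mono sum_mono2)
        (auto simp: u_def a_def c_def intro!: divide_nonneg_nonneg mult_nonneg_nonneg)
    also have "(\<Sum>k\<le>N. c k * w k) = (p + (1 - p)) ^ N"
      unfolding binomial_ring c_def w_def by (simp add: mult.assoc)
    finally show "(\<Sum>k\<in>{m..N}. a k * w k) \<le> u" by simp
  qed
  also have "u = measure_pmf.prob (pmf_of_set {T. T \<subseteq> I \<and> card T = m}) {T. P T}"
  proof -
    have ne: "{T. T \<subseteq> I \<and> card T = m} \<noteq> {}"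
      using obtain_subset_with_card_n[OF m] by blast
    have fS: "finite {T. T \<subseteq> I \<and> card T = m}" using I by auto
    have "{T. T \<subseteq> I \<and> card T = m} \<inter> {T. P T} = {T. T \<subseteq> I \<and> card T = m \<and> P T}" by auto
    thus ?thesis using measure_pmf_of_set[OF ne fS] n_subsets[OF I]
      by (simp add: u_def a_def c_def acnt_def N_def)
  qed
  finally show ?thesis unfolding B_def c_def w_def N_def by (simp add: ac_simps)
qed

theorem lemma1:
  fixes n1 n2 r rG m0 :: nat
    and L G S0 :: "real mat"
    and lam \<epsilon>0 \<rho>0 :: real
  assumes "n1 > 0" and "n2 > 0"
    and "L \<in> carrier_mat n1 n2" and "mrank n1 L = r"
    and "G \<in> carrier_mat n1 rG" and "transpose_mat G * G = 1\<^sub>m rG"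
    and "mrank n1 ((1\<^sub>m n1 - G * transpose_mat G) * L) < r"
    and "S0 \<in> carrier_mat n1 n2" and "\<forall>i<n1. \<forall>j<n2. S0 $$ (i,j) \<noteq> 0"
    and "lam > 0"
    and "\<epsilon>0 > 0"
    and "\<rho>0 = real m0 / real (n1 * n2) + \<epsilon>0" and "0 \<le> \<rho>0" and "\<rho>0 \<le> 1"
  shows "measure_pmf.prob (unif_model n1 n2 m0) {\<Omega>. Success n1 n2 rG lam L G S0 \<Omega>}
         \<ge> measure_pmf.prob (ber_model n1 n2 \<rho>0) {\<Omega>. Success n1 n2 rG lam L G S0 \<Omega>}
           - exp (- 2 * real (n1 * n2) * \<epsilon>0 ^ 2)"
proof -
  define I where "I = idx_set n1 n2"
  define N where "N = n1 * n2"
  define P where "P = Success n1 n2 rG lam L G S0"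
  have I: "finite I" and cI: "card I = N" by (auto simp: I_def idx_set_def N_def)
  have Npos: "N > 0" using assms(1,2) by (simp add: N_def)
  have down: "P T'" if "P T" "T' \<subseteq> T" for T T'
    using success_mono[OF assms(3) assms(5) assms(8) assms(10)] that unfolding P_def by blast
  have "real m0 / real N < 1" using assms(11,12,14) by (simp add: N_def)
  hence m: "m0 \<le> N" using Npos by (simp add: divide_simps)
  have main: "measure_pmf.prob (ber_model n1 n2 \<rho>0) {T. P T}
    \<le> measure_pmf.prob (unif_model n1 n2 m0) {T. P T}
      + (\<Sum>k\<le>m0. real (N choose k) * \<rho>0 ^ k * (1 - \<rho>0) ^ (N - k))"
    using ber_bound[OF I down, where p="\<rho>0" and m=m0] assms(13,14) m cI
    unfolding ber_model_def unif_model_def I_def by simp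
  have bd: "binomial_distribution \<rho>0" using assms(13,14) by (simp add: binomial_distribution_def)
  have eqset: "{..m0} = {x. real x / real N \<le> \<rho>0 - \<epsilon>0}"
  proof -
    have e: "\<rho>0 - \<epsilon>0 = real m0 / real N" using assms(12) by (simp add: N_def)
    show ?thesis using Npos by (auto simp: e divide_le_cancel)
  qed
  have tail: "(\<Sum>k\<le>m0. real (N choose k) * \<rho>0 ^ k * (1 - \<rho>0) ^ (N - k))
      \<le> exp (- 2 * real N * \<epsilon>0 ^ 2)"
  proof -
    have "(\<Sum>k\<le>m0. real (N choose k) * \<rho>0 ^ k * (1 - \<rho>0) ^ (N - k))
        = measure_pmf.prob (binomial_pmf N \<rho>0) {..m0}"
      using assms(13,14) by (simp add: measure_measure_pmf_finite)
    also have "\<dots> = measure_pmf.prob (binomial_pmf N \<rho>0) {x. real x / real N \<le> \<rho>0 - \<epsilon>0}"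
      by (simp only: eqset)
    also have "\<dots> \<le> exp (- 2 * real N * \<epsilon>0 ^ 2)"
      using binomial_distribution.prob_le'[OF bd Npos, of \<epsilon>0] assms(11) by simp
    finally show ?thesis .
  qed
  show ?thesis using main tail unfolding P_def N_def by linarith
qed

end
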